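(* Let $U\subset\mathbb{R}^s$ be open, $X:U\to\mathbb{R}^{n+1}_1$ a spacelike embedding, $M=X(U)$, and $n^T$ a smooth future directed unit timelike normal field. Let $d\mathfrak{v}_{N_1(M)[n^T]}$ be the Riemannian volume element of $N_1(M)[n^T]$ and $d\mathfrak{v}_{\mathbb{S}^{n-1}_+}$ that of $\mathbb{S}^{n-1}_+$. Then at every $(p,\xi)\in N_1(M)[n^T]$, $$\big(\widetilde{\mathbb{LG}}(n^T)^*d\mathfrak{v}_{\mathbb{S}^{n-1}_+}\big)_{(p,\xi)}=|\widetilde K_\ell(n^T)(p,\xi)|\,d\mathfrak{v}_{N_1(M)[n^T](p,\xi)}.$$
   Context: $\mathbb{R}^{n+1}_1$ is $\mathbb{R}^{n+1}$ with $\langle x,y\rangle=-x_0y_0+\sum_{i=1}^n x_iy_i$; spacelike embedding means tangent spaces consist of vectors with $\langle v,v\rangle>0$. $\mathbb{S}^{n-1}_+=\{x:\langle x,x\rangle=0,x_0=1\}$ with the (positive definite) metric induced by $\langle\,,\rangle$; for nonzero lightlike $x$, $\widetilde x=x/x_0$. $N_p(M)$ is the pseudo-orthogonal complement of $T_pM$; $n^T(u)\in N_{X(u)}(M)$, $\langle n^T,n^T\rangle=-1$, $n^T_0>0$. $N_1(M)_p[n^T]=\{\xi\in N_p(M):\langle\xi,\xi\rangle=1,\langle\xi,n^T(p)\rangle=0\}$, $N_1(M)[n^T]=\bigcup_pN_1(M)_p[n^T]$. Its tangent space at $(p,\xi)$ is identified with $T_pM\oplus\{\eta\in N_p(M):\langle\eta,\xi\rangle=\langle\eta,n^T(p)\rangle=0\}\subset\mathbb{R}^{n+1}_1$,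 and it carries the Riemannian metric induced by $\langle\,,\rangle$. $\mathbb{R}^{n+1}_1=T_{(p,\xi)}N_1(M)[n^T]\oplus\mathrm{span}\{n^T(p),\xi\}$ and $\Pi^\tau$ denotes projection to the first summand. $\widetilde{\mathbb{LG}}(n^T)(p,\xi)=\widetilde{n^T(p)+\xi}$ and $\widetilde K_\ell(n^T)(p,\xi)=\det\big(-\Pi^\tau\circ d_{(p,\xi)}\widetilde{\mathbb{LG}}(n^T)\big)$. *)

theory Defs
  imports "HOL-Analysis.Analysis"
begin

fun iter_dd :: "'a list \<Rightarrow> ('a::real_normed_vector \<Rightarrow> 'b::real_normed_vector) \<Rightarrow> 'a \<Rightarrow> 'b" where
  "iter_dd [] f = f"
| "iter_dd (v # vs) f = (\<lambda>x. frechet_derivative (iter_dd vs f) (at x) v)"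

definition smooth_on :: "'a::real_normed_vector set \<Rightarrow> ('a \<Rightarrow> 'b::real_normed_vector) \<Rightarrow> bool" where
  "smooth_on S f \<longleftrightarrow> (\<forall>vs. \<forall>x\<in>S. iter_dd vs f differentiable (at x))"

section \<open>Lorentz-Minkowski space R^{n+1}_1 = real \<times> real^'n  (x_0 = fst x)\<close>

type_synonym 'n lor = "real \<times> (real ^ 'n)"

definition lprod :: "'n::finite lor \<Rightarrow> 'n lor \<Rightarrow> real" where
  "lprod x y = - fst x * fst y + snd x \<bullet> snd y"

definition ltilde :: "'n::finite lor \<Rightarrow> 'n lor" where
  "ltilde x = (1 / fst x) *\<^sub>R x"

definition ndet :: "nat \<Rightarrow> (nat \<Rightarrow> nat \<Rightarrow> real) \<Rightarrow> real" where
  "ndet k A = (\<Sum>p | p permutes {..<k}. of_int (sign p) * (\<Prod>i<k. A i (p i)))"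

definition sub_det :: "'a::euclidean_space set \<Rightarrow> ('a \<Rightarrow> 'a) \<Rightarrow> real" where
  "sub_det V f =
     (let k = dim V;
          b = (SOME b. (\<forall>i<k. b i \<in> V) \<and> inj_on b {..<k} \<and> independent (b ` {..<k})
                        \<and> span (b ` {..<k}) = V);
          A = (SOME A. \<forall>j<k. f (b j) = (\<Sum>i<k. A i j *\<^sub>R b i))
      in ndet k A)"

definition vol_elem :: "nat \<Rightarrow> ('v \<Rightarrow> 'v \<Rightarrow> real) \<Rightarrow> (nat \<Rightarrow> 'v) \<Rightarrow> real" where
  "vol_elem k g t = sqrt (ndet k (\<lambda>i j. g (t i) (t j)))"

definition dX :: "('s::euclidean_space \<Rightarrow> 'n::finite lor) \<Rightarrow> 's \<Rightarrow> 's \<Rightarrow> 'n lor" where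
  "dX X u = frechet_derivative X (at u)"

definition spacelike_embedding :: "'s::euclidean_space set \<Rightarrow> ('s \<Rightarrow> 'n::finite lor) \<Rightarrow> bool" where
  "spacelike_embedding U X \<longleftrightarrow>
     open U \<and> smooth_on U X \<and> inj_on X U \<and> continuous_on (X ` U) (inv_into U X) \<and>
     (\<forall>u\<in>U. \<forall>a. a \<noteq> 0 \<longrightarrow> lprod (dX X u a) (dX X u a) > 0)"

definition tangent_sp :: "('s::euclidean_space \<Rightarrow> 'n::finite lor) \<Rightarrow> 's \<Rightarrow> 'n lor set" where
  "tangent_sp X u = range (dX X u)"

definition normal_sp :: "('s::euclidean_space \<Rightarrow> 'n::finite lor) \<Rightarrow> 's \<Rightarrow> 'n lor set" where
  "normal_sp X u = {x. \<forall>v\<in>tangent_sp X u. lprod x v = 0}"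

definition future_unit_timelike_normal ::
  "'s::euclidean_space set \<Rightarrow> ('s \<Rightarrow> 'n::finite lor) \<Rightarrow> ('s \<Rightarrow> 'n lor) \<Rightarrow> bool" where
  "future_unit_timelike_normal U X nT \<longleftrightarrow> smooth_on U nT \<and>
     (\<forall>u\<in>U. nT u \<in> normal_sp X u \<and> lprod (nT u) (nT u) = -1 \<and> fst (nT u) > 0)"

definition N1_fib :: "('s::euclidean_space \<Rightarrow> 'n::finite lor) \<Rightarrow> ('s \<Rightarrow> 'n lor) \<Rightarrow> 's \<Rightarrow> 'n lor set" where
  "N1_fib X nT u = {\<xi> \<in> normal_sp X u. lprod \<xi> \<xi> = 1 \<and> lprod \<xi> (nT u) = 0}"

definition N1 :: "'s::euclidean_space set \<Rightarrow> ('s \<Rightarrow> 'n::finite lor) \<Rightarrow> ('s \<Rightarrow> 'n lor) \<Rightarrow> ('n lor \<times> 'n lor) set" where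
  "N1 U X nT = {(X u, \<xi>) | u \<xi>. u \<in> U \<and> \<xi> \<in> N1_fib X nT u}"

definition LGt :: "'s::euclidean_space set \<Rightarrow> ('s \<Rightarrow> 'n::finite lor) \<Rightarrow> ('s \<Rightarrow> 'n lor) \<Rightarrow> 'n lor \<times> 'n lor \<Rightarrow> 'n lor" where
  "LGt U X nT = (\<lambda>(p, \<xi>). ltilde (nT (inv_into U X p) + \<xi>))"

definition N1_curve :: "'s::euclidean_space set \<Rightarrow> ('s \<Rightarrow> 'n::finite lor) \<Rightarrow> ('s \<Rightarrow> 'n lor) \<Rightarrow> 's \<Rightarrow> 'n lor
    \<Rightarrow> (real \<Rightarrow> 's) \<Rightarrow> (real \<Rightarrow> 'n lor) \<Rightarrow> bool" where
  "N1_curve U X nT u \<xi> c e \<longleftrightarrow> c 0 = u \<and> e 0 = \<xi> \<and> (\<forall>t. c t \<in> U \<and> e t \<in> N1_fib X nT (c t)) \<and>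
     c differentiable (at 0) \<and> e differentiable (at 0)"

definition TN1 :: "'s::euclidean_space set \<Rightarrow> ('s \<Rightarrow> 'n::finite lor) \<Rightarrow> ('s \<Rightarrow> 'n lor) \<Rightarrow> 's \<Rightarrow> 'n lor
    \<Rightarrow> ('n lor \<times> 'n lor) set" where
  "TN1 U X nT u \<xi> = {(vector_derivative (X \<circ> c) (at 0), vector_derivative e (at 0)) | c e.
      N1_curve U X nT u \<xi> c e}"

definition dLGt :: "'s::euclidean_space set \<Rightarrow> ('s \<Rightarrow> 'n::finite lor) \<Rightarrow> ('s \<Rightarrow> 'n lor) \<Rightarrow> 's \<Rightarrow> 'n lor
    \<Rightarrow> 'n lor \<times> 'n lor \<Rightarrow> 'n lor" where
  "dLGt U X nT u \<xi> t = (SOME d. \<exists>c e. N1_curve U X nT u \<xi> c e \<and>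
      t = (vector_derivative (X \<circ> c) (at 0), vector_derivative e (at 0)) \<and>
      d = vector_derivative (\<lambda>s. LGt U X nT (X (c s), e s)) (at 0))"

text \<open>The subspace  T_pM (+) {eta in N_p(M). <eta,xi> = <eta,n^T(p)> = 0}  of R^{n+1}_1
  with which T_{(p,xi)} N_1(M)[n^T] is identified.\<close>
definition TN1_id :: "('s::euclidean_space \<Rightarrow> 'n::finite lor) \<Rightarrow> ('s \<Rightarrow> 'n lor) \<Rightarrow> 's \<Rightarrow> 'n lor \<Rightarrow> 'n lor set" where
  "TN1_id X nT u \<xi> = {v + \<eta> | v \<eta>. v \<in> tangent_sp X u \<and>
      \<eta> \<in> normal_sp X u \<and> lprod \<eta> \<xi> = 0 \<and> lprod \<eta> (nT u) = 0}"

definition Pi_tau :: "('s::euclidean_space \<Rightarrow> 'n::finite lor) \<Rightarrow> ('s \<Rightarrow> 'n lor) \<Rightarrow> 's \<Rightarrow> 'n lor \<Rightarrow> 'n lor \<Rightarrow> 'n lor" where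
  "Pi_tau X nT u \<xi> z = (THE v. v \<in> TN1_id X nT u \<xi> \<and> z - v \<in> span {nT u, \<xi>})"

end

theory Submission
  imports Defs "Jordan_Normal_Form.Determinant"
begin

lemma lprod_eq_inner: "lprod x y = inner (- fst x, snd x) y"
  by (simp add: lprod_def inner_prod_def)

lemma bb_lprod: "bounded_bilinear (lprod :: 'n::finite lor \<Rightarrow> _)"
proof -
  have "bounded_linear (\<lambda>x::'n lor. (- fst x, snd x))"
    by (intro bounded_linear_Pair bounded_linear_minus bounded_linear_fst bounded_linear_snd)
  from bounded_bilinear.comp1[OF bounded_bilinear_inner this]
  show ?thesis by (simp add: lprod_eq_inner[abs_def])
qed

interpretation lp: bounded_bilinear "lprod :: 'n::finite lor \<Rightarrow> _" by (rule bb_lprod)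

lemma lprod_sym: "lprod x y = lprod y x"
  by (simp add: lprod_def inner_commute)

lemma ndet_jnf: "ndet k M = Determinant.det (mat k k (\<lambda>(i,j). M i j))"
proof -
  have "Determinant.det (mat k k (\<lambda>(i,j). M i j)) =
     (\<Sum>p\<in>{p. p permutes {0..<k}}. signof p * (\<Prod>i = 0..<k. M i (p i)))"
    unfolding Determinant.det_def
    by (auto intro!: sum.cong prod.cong simp: permutes_in_image)
  then show ?thesis unfolding ndet_def by (simp add: lessThan_atLeast0)
qed

lemma ndet_cong: "(\<And>i j. i < k \<Longrightarrow> j < k \<Longrightarrow> A i j = B i j) \<Longrightarrow> ndet k A = ndet k B"
  unfolding ndet_def
  apply (intro sum.cong refl arg_cong2[where f="(*)"] prod.cong)
  apply (auto)
  by (metis lessThan_iff permutes_in_image)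

lemma ndet_mult: "ndet k (\<lambda>i j. \<Sum>l<k. A i l * B l j) = ndet k A * ndet k B"
proof -
  have "mat k k (\<lambda>(i,j). \<Sum>l<k. A i l * B l j) = mat k k (\<lambda>(i,j). A i j) * mat k k (\<lambda>(i,j). B i j)"
    by (rule eq_matI) (auto simp: scalar_prod_def lessThan_atLeast0 intro!: sum.cong)
  then show ?thesis unfolding ndet_jnf
    by (simp add: det_mult[of _ k])
qed

lemma ndet_transpose: "ndet k (\<lambda>i j. A j i) = ndet k A"
proof -
  have "mat k k (\<lambda>(i,j). A j i) = transpose_mat (mat k k (\<lambda>(i,j). A i j))"
    by (rule eq_matI) auto
  then show ?thesis unfolding ndet_jnf by (simp add: det_transpose[of _ k])
qed

lemma gram_expand:
  assumes bb: "bounded_bilinear g"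
    and v: "\<And>i. i < k \<Longrightarrow> v i = (\<Sum>p<k. M p i *\<^sub>R b p)"
  shows "ndet k (\<lambda>i l. g (v i) (v l)) = ndet k M * ndet k (\<lambda>p q. g (b p) (b q)) * ndet k M"
proof -
  interpret g: bounded_bilinear g by (rule bb)
  have "ndet k (\<lambda>i l. g (v i) (v l)) = ndet k (\<lambda>i l. \<Sum>p<k. M p i * (\<Sum>q<k. g (b p) (b q) * M q l))"
  proof (rule ndet_cong)
    fix i l assume il: "i < k" "l < k"
    have "g (v i) (v l) = (\<Sum>p<k. g (M p i *\<^sub>R b p) (\<Sum>q<k. M q l *\<^sub>R b q))"
      unfolding v[OF il(1)] v[OF il(2)] g.sum_left ..
    also have "\<dots> = (\<Sum>p<k. \<Sum>q<k. M q l * (M p i * g (b p) (b q)))"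
      unfolding g.sum_right g.scaleR_left g.scaleR_right real_scaleR_def ..
    also have "\<dots> = (\<Sum>p<k. M p i * (\<Sum>q<k. g (b p) (b q) * M q l))"
      unfolding sum_distrib_left
      by (intro sum.cong refl) (rule mult.left_commute[THEN trans], rule arg_cong[where f="(*) _"], rule mult.commute)
    finally show "g (v i) (v l) = (\<Sum>p<k. M p i * (\<Sum>q<k. g (b p) (b q) * M q l))" .
  qed
  also have "\<dots> = ndet k (\<lambda>i p. M p i) * ndet k (\<lambda>p l. \<Sum>q<k. g (b p) (b q) * M q l)"
    by (rule ndet_mult)
  also have "\<dots> = ndet k M * (ndet k (\<lambda>p q. g (b p) (b q)) * ndet k M)"
    by (simp only: ndet_transpose[of k M] ndet_mult[of k "\<lambda>p q. g (b p) (b q)" M])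
  finally show ?thesis by (simp only: mult.assoc)
qed

lemma span_fin_expand:
  fixes b :: "nat \<Rightarrow> 'a::real_vector"
  assumes "inj_on b {..<m}" "x \<in> span (b ` {..<m})"
  shows "\<exists>c. x = (\<Sum>i<m. c i *\<^sub>R b i)"
proof -
  from assms(2) obtain u where "x = (\<Sum>v\<in>b ` {..<m}. u v *\<^sub>R v)"
    by (auto simp: span_finite)
  also have "\<dots> = (\<Sum>i<m. u (b i) *\<^sub>R b i)"
    by (subst sum.reindex[OF assms(1)]) simp
  finally have "x = (\<Sum>i<m. (\<lambda>i. u (b i)) i *\<^sub>R b i)" by simp
  then show ?thesis by metis
qed

lemma subdet_vol:
  fixes W :: "'a::euclidean_space set" and f :: "'a \<Rightarrow> 'a" and w :: "nat \<Rightarrow> 'a"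
  assumes bb: "bounded_bilinear g" and sW: "subspace W" and dW: "dim W = m"
    and fW: "\<forall>z\<in>W. f z \<in> W"
    and flin: "\<And>c y. (\<forall>j<m. y j \<in> W) \<Longrightarrow> f (\<Sum>j<m. c j *\<^sub>R y j) = (\<Sum>j<m. c j *\<^sub>R f (y j))"
    and wW: "\<forall>i<m. w i \<in> W"
  shows "vol_elem m g (\<lambda>i. f (w i)) = \<bar>sub_det W f\<bar> * vol_elem m g w"
proof -
  define P where "P = (\<lambda>b. (\<forall>i<m. b i \<in> W) \<and> inj_on b {..<m} \<and> independent (b ` {..<m})
                        \<and> span (b ` {..<m}) = W)"
  have "\<exists>b. P b"
  proof -
    obtain B where B: "B \<subseteq> W" "independent B" "W \<subseteq> span B" "card B = dim W"
      using basis_exists[of W] by blast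
    have fB: "finite B" using B(2) by (simp add: finiteI_independent)
    obtain h where h: "bij_betw h {0..<card B} B" using ex_bij_betw_nat_finite[OF fB] by blast
    have hB: "h ` {..<m} = B" using h B(4) dW by (simp add: bij_betw_def lessThan_atLeast0)
    have "span B = W" using B sW by (simp add: span_subspace)
    then show ?thesis unfolding P_def using h hB B dW
      by (intro exI[of _ h]) (auto simp: bij_betw_def lessThan_atLeast0)
  qed
  define b where "b = (SOME b. P b)"
  have Pb: "P b" unfolding b_def using \<open>\<exists>b. P b\<close> by (rule someI_ex)
  then have bW: "\<forall>i<m. b i \<in> W" and binj: "inj_on b {..<m}" and bsp: "span (b ` {..<m}) = W"
    unfolding P_def by auto
  have expand: "\<exists>c. x = (\<Sum>i<m. c i *\<^sub>R b i)" if "x \<in> W" for x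
    using span_fin_expand[OF binj] bsp that by blast
  have "\<forall>j. \<exists>c. j < m \<longrightarrow> f (b j) = (\<Sum>i<m. c i *\<^sub>R b i)"
    using expand fW bW by blast
  then obtain cc where cc: "\<And>j. j < m \<Longrightarrow> f (b j) = (\<Sum>i<m. cc j i *\<^sub>R b i)" by metis
  have exA: "\<exists>A. \<forall>j<m. f (b j) = (\<Sum>i<m. A i j *\<^sub>R b i)"
    by (rule exI[of _ "\<lambda>i j. cc j i"]) (simp add: cc)
  define A where "A = (SOME A. \<forall>j<m. f (b j) = (\<Sum>i<m. A i j *\<^sub>R b i))"
  have A: "\<forall>j<m. f (b j) = (\<Sum>i<m. A i j *\<^sub>R b i)" unfolding A_def using exA by (rule someI_ex)
  have "\<forall>j. \<exists>c. j < m \<longrightarrow> w j = (\<Sum>i<m. c i *\<^sub>R b i)"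
    using expand wW by blast
  then obtain dd where dd: "\<And>j. j < m \<Longrightarrow> w j = (\<Sum>i<m. dd j i *\<^sub>R b i)" by metis
  define C where "C = (\<lambda>i j. dd j i)"
  have wC: "w i = (\<Sum>p<m. C p i *\<^sub>R b p)" if "i < m" for i
    using dd[OF that] by (simp add: C_def)
  have fwC: "f (w i) = (\<Sum>p<m. (\<Sum>j<m. A p j * C j i) *\<^sub>R b p)" if "i < m" for i
  proof -
    have "f (w i) = (\<Sum>j<m. C j i *\<^sub>R f (b j))"
      using wC[OF that] flin bW by simp
    also have "\<dots> = (\<Sum>j<m. \<Sum>p<m. (A p j * C j i) *\<^sub>R b p)"
      using A by (simp add: scaleR_sum_right mult.commute)
    also have "\<dots> = (\<Sum>p<m. (\<Sum>j<m. A p j * C j i) *\<^sub>R b p)"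
      by (subst sum.swap) (simp add: scaleR_sum_left)
    finally show ?thesis .
  qed
  define G where "G = ndet m (\<lambda>p q. g (b p) (b q))"
  have g1: "ndet m (\<lambda>i l. g (w i) (w l)) = ndet m C * G * ndet m C"
    unfolding G_def by (rule gram_expand[OF bb wC])
  have g2: "ndet m (\<lambda>i l. g (f (w i)) (f (w l))) = (ndet m A * ndet m C) * G * (ndet m A * ndet m C)"
    unfolding G_def using gram_expand[OF bb fwC] by (simp only: ndet_mult)
  have sd: "sub_det W f = ndet m A"
    unfolding sub_det_def Let_def dW P_def[symmetric] b_def[symmetric] A_def[symmetric] ..
  have "vol_elem m g (\<lambda>i. f (w i)) = sqrt ((ndet m A)^2 * (ndet m C * G * ndet m C))"
    unfolding vol_elem_def g2 by (simp add: power2_eq_square mult_ac)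
  also have "\<dots> = \<bar>ndet m A\<bar> * vol_elem m g w"
    unfolding vol_elem_def g1 real_sqrt_mult by simp
  finally show ?thesis by (simp add: sd)
qed
lemma lprodD_expand:
  fixes D :: "'a::euclidean_space \<Rightarrow> 'n::finite lor"
  assumes "linear D"
  shows "lprod x (D w) = (\<Sum>i\<in>Basis. (w \<bullet> i) * lprod x (D i))"
proof -
  have "D w = D (\<Sum>i\<in>Basis. (w \<bullet> i) *\<^sub>R i)" by (simp add: euclidean_representation)
  also have "\<dots> = (\<Sum>i\<in>Basis. (w \<bullet> i) *\<^sub>R D i)"
    by (simp add: linear_sum[OF assms] linear_cmul[OF assms])
  finally show ?thesis by (simp add: lp.sum_right lp.scaleR_right)
qed

lemma tang_decomp:
  fixes D :: "'a::euclidean_space \<Rightarrow> 'n::finite lor"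
  assumes lin: "linear D" and pos: "\<And>a. a \<noteq> 0 \<Longrightarrow> lprod (D a) (D a) > 0"
  shows "\<exists>v. \<forall>w. lprod (z - D v) (D w) = 0"
proof -
  define G where "G v = (\<Sum>i\<in>Basis. lprod (D v) (D i) *\<^sub>R i)" for v
  have linG: "linear G"
    by (rule linearI) (simp_all add: G_def linear_add[OF lin] linear_cmul[OF lin] lp.add_left
        lp.scaleR_left scaleR_add_left sum.distrib scaleR_sum_right)
  have Gi: "G v \<bullet> i = lprod (D v) (D i)" if "i \<in> Basis" for v i
    using that by (simp add: G_def inner_sum_left inner_Basis if_distrib cong: if_cong)
  have "inj G"
  proof (subst linear_injective_0[OF linG], intro allI impI)
    fix v assume "G v = 0"
    then have "lprod (D v) (D i) = 0" if "i \<in> Basis" for i using Gi[OF that, of v] by simp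
    then have "lprod (D v) (D v) = 0" by (simp add: lprodD_expand[OF lin, of "D v" v])
    then show "v = 0" using pos by force
  qed
  then have "surj G" using linear_injective_imp_surjective[OF linG] by simp
  then obtain v where v: "G v = (\<Sum>i\<in>Basis. lprod z (D i) *\<^sub>R i)" by (metis surjD)
  have "lprod (D v) (D i) = lprod z (D i)" if "i \<in> Basis" for i
  proof -
    have "G v \<bullet> i = lprod z (D i)"
      using that by (simp add: v inner_sum_left inner_Basis if_distrib cong: if_cong)
    then show ?thesis using Gi[OF that] by simp
  qed
  then have "lprod (z - D v) (D w) = 0" for w
    by (simp add: lprodD_expand[OF lin, of z w] lprodD_expand[OF lin, of "D v" w] lp.diff_left)
  then show ?thesis by blast
qed
lemma inj_from_dim:
  fixes f :: "'a::euclidean_space \<Rightarrow> 'b::euclidean_space"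
  assumes lin: "linear f" and sV: "subspace V" and d: "dim V \<le> dim (f ` V)"
  shows "inj_on f V"
proof -
  obtain B where B: "B \<subseteq> V" "independent B" "V \<subseteq> span B" "card B = dim V"
    using basis_exists[of V] by blast
  have fB: "finite B" using B(2) by (simp add: finiteI_independent)
  have spB: "span B = V" using B sV by (simp add: span_subspace)
  have sp: "span (f ` B) = f ` V" using span_linear_image[OF lin, of B] spB by simp
  have c1: "card (f ` B) \<le> card B" using fB by (rule card_image_le)
  have ind: "independent (f ` B)"
    by (rule card_le_dim_spanning[of _ "f ` V"]) (use B sp fB c1 d in auto)
  have "dim (f ` V) = card (f ` B)"
    using dim_eq_card_independent[OF ind] sp by (metis dim_span)
  then have "card (f ` B) = card B" using c1 d B(4) by simp
  then have "inj_on f B" by (rule eq_card_imp_inj_on[OF fB])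
  then have "inj_on f (span B)" using linear_inj_on_span_iff_independent_image[OF lin ind] by simp
  then show ?thesis using spB by simp
qed

lemma lprod_const_deriv:
  assumes "\<And>s. lprod (a s) (b s) = k" "(a has_vector_derivative a') (at 0)" "(b has_vector_derivative b') (at 0)"
  shows "lprod (a 0) b' + lprod a' (b 0) = 0"
proof -
  have "((\<lambda>s. lprod (a s) (b s)) has_vector_derivative (lprod (a 0) b' + lprod a' (b 0))) (at 0)"
    by (rule lp.has_vector_derivative[OF assms(2,3)])
  moreover have "((\<lambda>s. lprod (a s) (b s)) has_vector_derivative 0) (at 0)"
    using assms(1) by simp
  ultimately show ?thesis by (rule vector_derivative_unique_at)
qed

lemma vd_chain:
  assumes "(c has_vector_derivative c') (at x)" "(F has_derivative F') (at (c x))"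
  shows "((\<lambda>s. F (c s)) has_vector_derivative F' c') (at x)"
proof -
  have "(F \<circ> c has_derivative F' \<circ> (\<lambda>h. h *\<^sub>R c')) (at x)"
    using diff_chain_at[OF assms(1)[unfolded has_vector_derivative_def] assms(2)] .
  moreover have "F' \<circ> (\<lambda>h. h *\<^sub>R c') = (\<lambda>h. h *\<^sub>R F' c')"
    using has_derivative_linear[OF assms(2)] by (auto simp: linear_cmul)
  ultimately show ?thesis unfolding has_vector_derivative_def by (simp add: comp_def)
qed

lemma ltilde_diff:
  assumes "fst x \<noteq> (0::real)"
  shows "(ltilde :: 'n::finite lor \<Rightarrow> _) differentiable (at x)"
proof -
  have d1: "(\<lambda>y::'n lor. fst y) differentiable (at x)"
    unfolding differentiable_def using has_derivative_fst[OF has_derivative_ident] by blast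
  have d2: "(\<lambda>y::'n lor. 1 / fst y) differentiable (at x)"
    by (rule differentiable_divide[OF differentiable_const d1 assms])
  have "(\<lambda>y::'n lor. (1 / fst y) *\<^sub>R y) differentiable (at x)"
    by (rule differentiable_scaleR[OF d2 differentiable_ident])
  then show ?thesis unfolding ltilde_def[abs_def] .
qed

lemma span2: "z \<in> span {a, b} \<longleftrightarrow> (\<exists>p q. z = p *\<^sub>R a + q *\<^sub>R b)"
proof
  assume "z \<in> span {a, b}"
  then obtain p where "z - p *\<^sub>R a \<in> span {b}" unfolding span_breakdown_eq by blast
  then obtain q where "z - p *\<^sub>R a = q *\<^sub>R b" unfolding span_singleton by blast
  then have "z = p *\<^sub>R a + q *\<^sub>R b" by (simp add: diff_eq_eq add.commute)
  then show "\<exists>p q. z = p *\<^sub>R a + q *\<^sub>R b" by blast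
next
  assume "\<exists>p q. z = p *\<^sub>R a + q *\<^sub>R b"
  then obtain p q where pq: "z = p *\<^sub>R a + q *\<^sub>R b" by blast
  have "a \<in> span {a, b}" "b \<in> span {a, b}" by (simp_all add: span_base)
  then show "z \<in> span {a, b}" unfolding pq by (intro span_add span_scale)
qed

lemma lprod_ltilde: "lprod y y = 0 \<Longrightarrow> lprod (ltilde y) (ltilde y) = 0"
  by (simp add: ltilde_def lp.scaleR_left lp.scaleR_right)
theorem theorem6p1:
  fixes U :: "(real ^ 's) set"
    and X :: "real ^ 's \<Rightarrow> 'n::finite lor"
    and nT :: "real ^ 's \<Rightarrow> 'n lor"
    and \<iota> :: "'n lor \<times> 'n lor \<Rightarrow> 'n lor"
    and u :: "real ^ 's" and \<xi> :: "'n lor"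
    and t :: "nat \<Rightarrow> 'n lor \<times> 'n lor"
  assumes emb: "spacelike_embedding U X"
    and nT: "future_unit_timelike_normal U X nT"
    and pt: "u \<in> U" "\<xi> \<in> N1_fib X nT u"
    and ident: "linear \<iota>" "bij_betw \<iota> (TN1 U X nT u \<xi>) (TN1_id X nT u \<xi>)"
    and tang: "\<forall>i < CARD('n) - 1. t i \<in> TN1 U X nT u \<xi>"
  shows "vol_elem (CARD('n) - 1) lprod (\<lambda>i. dLGt U X nT u \<xi> (t i))
       = \<bar>sub_det (TN1_id X nT u \<xi>)
            (\<lambda>z. - Pi_tau X nT u \<xi> (dLGt U X nT u \<xi> (inv_into (TN1 U X nT u \<xi>) \<iota> z)))\<bar>
         * vol_elem (CARD('n) - 1) (\<lambda>a b. lprod (\<iota> a) (\<iota> b)) t"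
proof -
  have injX: "inj_on X U" and smX: "smooth_on U X"
    and posX: "\<And>v a. v \<in> U \<Longrightarrow> a \<noteq> 0 \<Longrightarrow> lprod (dX X v a) (dX X v a) > 0"
    using emb unfolding spacelike_embedding_def by auto
  have smN: "smooth_on U nT" and nTp: "\<And>v. v \<in> U \<Longrightarrow> nT v \<in> normal_sp X v \<and> lprod (nT v) (nT v) = -1"
    using nT unfolding future_unit_timelike_normal_def by auto
  have Xdiff: "X differentiable (at v)" if "v \<in> U" for v
  proof -
    have "iter_dd [] X differentiable (at v)" using smX that unfolding smooth_on_def by blast
    then show ?thesis by simp
  qed
  have Ndiff: "nT differentiable (at v)" if "v \<in> U" for v
  proof -
    have "iter_dd [] nT differentiable (at v)" using smN that unfolding smooth_on_def by blast
    then show ?thesis by simp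
  qed
  have dXdiff: "(\<lambda>y. dX X y w) differentiable (at v)" if "v \<in> U" for v w
  proof -
    have "iter_dd [w] X differentiable (at v)" using smX that unfolding smooth_on_def by blast
    then show ?thesis by (simp add: dX_def)
  qed
  define DX where "DX = dX X u"
  have DXd: "(X has_derivative DX) (at u)"
    using Xdiff[OF pt(1)] unfolding DX_def dX_def by (simp add: frechet_derivative_works)
  have linDX: "linear DX" using has_derivative_linear[OF DXd] .
  have posDX: "lprod (DX a) (DX a) > 0" if "a \<noteq> 0" for a
    using posX[OF pt(1) that] by (simp add: DX_def)
  define \<nu> where "\<nu> = nT u"
  have \<nu>N: "\<nu> \<in> normal_sp X u" and \<nu>\<nu>: "lprod \<nu> \<nu> = -1" using nTp[OF pt(1)] by (auto simp: \<nu>_def)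
  have \<xi>N: "\<xi> \<in> normal_sp X u" and \<xi>\<xi>: "lprod \<xi> \<xi> = 1" and \<xi>\<nu>: "lprod \<xi> \<nu> = 0"
    using pt(2) by (auto simp: N1_fib_def \<nu>_def)
  have \<nu>\<xi>: "lprod \<nu> \<xi> = 0" using \<xi>\<nu> by (simp add: lprod_sym)
  have normal: "lprod z (DX a) = 0" if "z \<in> normal_sp X u" for z a
    using that by (auto simp: normal_sp_def tangent_sp_def DX_def)
  define W where "W = {z. lprod z \<nu> = 0 \<and> lprod z \<xi> = 0}"
  have sW: "subspace W"
    unfolding subspace_def W_def by (simp add: lp.add_left lp.scaleR_left lp.zero_left)
  have TW: "DX a \<in> W" for a
    using normal[OF \<nu>N, of a] normal[OF \<xi>N, of a] by (simp add: W_def lprod_sym)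
  have "\<forall>z. \<exists>v. \<forall>w. lprod (z - DX v) (DX w) = 0" using tang_decomp[OF linDX posDX] by blast
  from choice[OF this] obtain pv where pv: "\<And>z w. lprod (z - DX (pv z)) (DX w) = 0" by blast
  have pv_unique: "pv z = v" if "\<And>w. lprod (z - DX v) (DX w) = 0" for z v
  proof -
    have "lprod (DX (v - pv z)) (DX w) = 0" for w
      using pv[of z w] that[of w] by (simp add: linear_diff[OF linDX] lp.diff_left)
    then have "lprod (DX (v - pv z)) (DX (v - pv z)) = 0" by blast
    then show ?thesis using posDX[of "v - pv z"] by force
  qed
  have linpv: "linear pv"
  proof (rule linearI)
    fix x y show "pv (x + y) = pv x + pv y"
    proof (rule pv_unique)
      fix w
      have "x + y - DX (pv x + pv y) = (x - DX (pv x)) + (y - DX (pv y))"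
        by (simp add: linear_add[OF linDX])
      then show "lprod (x + y - DX (pv x + pv y)) (DX w) = 0" by (simp only: lp.add_left pv add_0)
    qed
  next
    fix r x show "pv (r *\<^sub>R x) = r *\<^sub>R pv x"
    proof (rule pv_unique)
      fix w
      have "r *\<^sub>R x - DX (r *\<^sub>R pv x) = r *\<^sub>R (x - DX (pv x))"
        by (simp add: linear_cmul[OF linDX] scaleR_diff_right)
      then show "lprod (r *\<^sub>R x - DX (r *\<^sub>R pv x)) (DX w) = 0" by (simp only: lp.scaleR_left pv scaleR_zero_right)
    qed
  qed
  have TN1_id_eq: "TN1_id X nT u \<xi> = W"
  proof
    show "TN1_id X nT u \<xi> \<subseteq> W"
    proof
      fix z assume "z \<in> TN1_id X nT u \<xi>"
      then obtain v \<eta> where z0: "z = v + \<eta>" "v \<in> tangent_sp X u" "lprod \<eta> \<xi> = 0" "lprod \<eta> (nT u) = 0"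
        unfolding TN1_id_def by blast
      then obtain a where "v = DX a" unfolding tangent_sp_def DX_def by blast
      then have z: "z = DX a + \<eta>" "lprod \<eta> \<xi> = 0" "lprod \<eta> \<nu> = 0" using z0 by (simp_all add: \<nu>_def)
      then show "z \<in> W" using TW[of a] by (simp add: W_def lp.add_left)
    qed
  next
    show "W \<subseteq> TN1_id X nT u \<xi>"
    proof
      fix z assume zW: "z \<in> W"
      have "z - DX (pv z) \<in> normal_sp X u"
        using pv[of z] by (auto simp: normal_sp_def tangent_sp_def DX_def lprod_sym)
      moreover have "lprod (z - DX (pv z)) \<xi> = 0" "lprod (z - DX (pv z)) \<nu> = 0"
        using zW TW[of "pv z"] by (auto simp: W_def lp.diff_left)
      ultimately show "z \<in> TN1_id X nT u \<xi>"
        unfolding TN1_id_def tangent_sp_def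
        by (intro CollectI exI[of _ "DX (pv z)"] exI[of _ "z - DX (pv z)"]) (auto simp: DX_def \<nu>_def)
    qed
  qed
  define Q where "Q z = z + lprod z \<nu> *\<^sub>R \<nu> - lprod z \<xi> *\<^sub>R \<xi>" for z
  have QW: "Q z \<in> W" for z
    by (simp add: Q_def W_def lp.add_left lp.diff_left lp.scaleR_left \<nu>\<nu> \<xi>\<xi> \<xi>\<nu> \<nu>\<xi>)
  have linQ: "linear Q"
    by (rule linearI) (simp_all add: Q_def lp.add_left lp.scaleR_left algebra_simps)
  have Pi_eq: "Pi_tau X nT u \<xi> z = Q z" for z
    unfolding Pi_tau_def TN1_id_eq
  proof (rule the_equality)
    show "Q z \<in> W \<and> z - Q z \<in> span {nT u, \<xi>}"
    proof
      show "Q z \<in> W" by (rule QW)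
      have "z - Q z = (- lprod z \<nu>) *\<^sub>R nT u + (lprod z \<xi>) *\<^sub>R \<xi>" by (simp add: Q_def \<nu>_def)
      then show "z - Q z \<in> span {nT u, \<xi>}" unfolding span2 by blast
    qed
  next
    fix v assume v: "v \<in> W \<and> z - v \<in> span {nT u, \<xi>}"
    then obtain p q where pq: "z - v = p *\<^sub>R \<nu> + q *\<^sub>R \<xi>" by (auto simp: span2 \<nu>_def)
    have "lprod (z - v) \<nu> = - p" "lprod (z - v) \<xi> = q"
      by (simp_all add: pq lp.add_left lp.scaleR_left \<nu>\<nu> \<xi>\<xi> \<xi>\<nu> \<nu>\<xi>)
    then have "lprod z \<nu> = - p" "lprod z \<xi> = q" using v by (auto simp: W_def lp.diff_left)
    then show "v = Q z" using pq by (simp add: Q_def algebra_simps)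
  qed
  have dimW: "dim W = CARD('n) - 1"
  proof -
    define S where "S = span {\<nu>, \<xi>}"
    have sS: "subspace S" by (simp add: S_def)
    have int: "W \<inter> S = {0}"
    proof safe
      fix z assume "z \<in> W" "z \<in> S"
      then obtain p q where pq: "z = p *\<^sub>R \<nu> + q *\<^sub>R \<xi>" "lprod z \<nu> = 0" "lprod z \<xi> = 0"
        by (auto simp: S_def span2 W_def)
      then have "p = 0" "q = 0" by (simp_all add: lp.add_left lp.scaleR_left \<nu>\<nu> \<xi>\<xi> \<xi>\<nu> \<nu>\<xi>)
      then show "z = 0" using pq by simp
    qed (auto simp: sW sS subspace_0 S_def)
    have sum: "{x + y |x y. x \<in> W \<and> y \<in> S} = UNIV"
    proof -
      have "z = Q z + (z - Q z)" for z by simp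
      moreover have "z - Q z \<in> S" for z
      proof -
        have "z - Q z = (- lprod z \<nu>) *\<^sub>R \<nu> + (lprod z \<xi>) *\<^sub>R \<xi>" by (simp add: Q_def)
        then show ?thesis unfolding S_def span2 by blast
      qed
      ultimately show ?thesis using QW by blast
    qed
    have indep: "independent {\<nu>, \<xi>}"
    proof (rule independent_insertI)
      show "\<nu> \<notin> span {\<xi>}"
      proof
        assume "\<nu> \<in> span {\<xi>}"
        then obtain k where "\<nu> = k *\<^sub>R \<xi>" by (auto simp: span_singleton)
        then have "lprod \<nu> \<nu> = k * k" by (simp add: lp.scaleR_left lp.scaleR_right \<xi>\<xi>)
        moreover have "k * k \<ge> 0" by simp
        ultimately show False using \<nu>\<nu> by linarith
      qed
      show "independent {\<xi>}" using \<xi>\<xi> by (auto simp: lp.zero_left)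
    qed
    have "\<nu> \<noteq> \<xi>" using \<nu>\<nu> \<xi>\<xi> by auto
    then have dS: "dim S = 2" using dim_eq_card_independent[OF indep] by (simp add: S_def)
    have "dim (UNIV :: 'n lor set) = 1 + CARD('n)" by simp
    then show ?thesis using dim_sums_Int[OF sW sS] sum int dS by simp
  qed
  define ell where "ell = \<nu> + \<xi>"
  have ellell: "lprod ell ell = 0" and ell\<nu>: "lprod ell \<nu> = -1"
    by (simp_all add: ell_def lp.add_left lp.add_right \<nu>\<nu> \<xi>\<xi> \<xi>\<nu> \<nu>\<xi>)
  have fstell: "fst ell \<noteq> 0"
  proof
    assume f0: "fst ell = 0"
    then have "snd ell \<bullet> snd ell = 0" using ellell by (simp add: lprod_def)
    then have "ell = 0" using f0 by (simp add: prod_eq_iff)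
    then show False using ell\<nu> by (simp add: lp.zero_left)
  qed
  define Dlt where "Dlt = frechet_derivative ltilde (at ell)"
  have ltd: "(ltilde has_derivative Dlt) (at ell)"
    using ltilde_diff[OF fstell] unfolding Dlt_def by (simp add: frechet_derivative_works)
  define DN where "DN = frechet_derivative nT (at u)"
  have DNd: "(nT has_derivative DN) (at u)"
    using Ndiff[OF pt(1)] unfolding DN_def by (simp add: frechet_derivative_works)
  define H where "H w = frechet_derivative (\<lambda>y. dX X y w) (at u)" for w
  have Hd: "((\<lambda>y. dX X y w) has_derivative H w) (at u)" for w
    using dXdiff[OF pt(1)] unfolding H_def by (simp add: frechet_derivative_works)
  have "inj DX"
    unfolding linear_injective_0[OF linDX]
  proof (intro allI impI)
    fix a assume "DX a = 0"
    then have "lprod (DX a) (DX a) = 0" by (simp add: lp.zero_left)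
    then show "a = 0" using posDX[of a] by force
  qed
  then obtain Linv where linLinv: "linear Linv" and LinvDX0: "Linv \<circ> DX = id"
    using linear_injective_left_inverse[OF linDX] by blast
  have LinvDX: "Linv (DX a) = a" for a using fun_cong[OF LinvDX0, of a] by simp
  define \<Lambda> where "\<Lambda> x = Dlt (DN (Linv (fst x)) + snd x)" for x
  have linDlt: "linear Dlt" using has_derivative_linear[OF ltd] .
  have linDN0: "linear DN" using has_derivative_linear[OF DNd] .
  have lin\<Lambda>: "linear \<Lambda>"
    by (rule linearI) (simp_all add: \<Lambda>_def linear_add[OF linDlt] linear_add[OF linDN0] linear_add[OF linLinv]
        linear_cmul[OF linDlt] linear_cmul[OF linDN0] linear_cmul[OF linLinv] scaleR_add_right add_ac)
  have Qpres: "lprod (Q x) (Q y) = lprod x y" if "lprod x ell = 0" "lprod y ell = 0" for x y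
  proof -
    have hx: "lprod x \<xi> = - lprod x \<nu>" "lprod y \<xi> = - lprod y \<nu>"
      using that by (simp_all add: ell_def lp.add_right eq_neg_iff_add_eq_0 add.commute)
    have "Q x = x + lprod x \<nu> *\<^sub>R ell" "Q y = y + lprod y \<nu> *\<^sub>R ell"
      by (simp_all add: Q_def ell_def scaleR_add_right hx add.assoc)
    moreover have "lprod ell y = 0" using that(2) lprod_sym[of ell y] by simp
    ultimately show ?thesis using that ellell
      by (simp add: lp.add_left lp.add_right lp.scaleR_left lp.scaleR_right)
  qed
  have curve: "vector_derivative (X \<circ> c) (at 0) = DX (vector_derivative c (at 0)) \<and>
      vector_derivative (\<lambda>s. LGt U X nT (X (c s), e s)) (at 0)
         = \<Lambda> (DX (vector_derivative c (at 0)), vector_derivative e (at 0)) \<and>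
      lprod (vector_derivative e (at 0)) \<xi> = 0 \<and>
      lprod (vector_derivative e (at 0)) \<nu> + lprod \<xi> (DN (vector_derivative c (at 0))) = 0 \<and>
      (\<forall>w. lprod (vector_derivative e (at 0)) (DX w) + lprod \<xi> (H w (vector_derivative c (at 0))) = 0) \<and>
      lprod (\<Lambda> (DX (vector_derivative c (at 0)), vector_derivative e (at 0))) ell = 0"
    if N: "N1_curve U X nT u \<xi> c e" for c e
  proof -
    have c0: "c 0 = u" and e0: "e 0 = \<xi>" and cU: "\<And>s. c s \<in> U"
      and eN: "\<And>s. e s \<in> N1_fib X nT (c s)"
      and cd: "c differentiable (at 0)" and ed: "e differentiable (at 0)"
      using N unfolding N1_curve_def by auto
    define c' where "c' = vector_derivative c (at 0)"
    define e' where "e' = vector_derivative e (at 0)"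
    have cv: "(c has_vector_derivative c') (at 0)" using cd by (simp add: c'_def vector_derivative_works)
    have ev: "(e has_vector_derivative e') (at 0)" using ed by (simp add: e'_def vector_derivative_works)
    have Xv: "((\<lambda>s. X (c s)) has_vector_derivative DX c') (at 0)"
      by (rule vd_chain[OF cv]) (simp add: c0 DXd)
    have Nv: "((\<lambda>s. nT (c s)) has_vector_derivative DN c') (at 0)"
      by (rule vd_chain[OF cv]) (simp add: c0 DNd)
    have hv: "((\<lambda>s. nT (c s) + e s) has_vector_derivative DN c' + e') (at 0)"
      by (rule has_vector_derivative_add[OF Nv ev])
    have Lv: "((\<lambda>s. ltilde (nT (c s) + e s)) has_vector_derivative Dlt (DN c' + e')) (at 0)"
      by (rule vd_chain[OF hv]) (use ltd in \<open>simp add: c0 e0 ell_def \<nu>_def\<close>)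
    have LGeq: "(\<lambda>s. LGt U X nT (X (c s), e s)) = (\<lambda>s. ltilde (nT (c s) + e s))"
      by (auto simp: LGt_def inv_into_f_f[OF injX cU])
    have LamEq: "\<Lambda> (DX c', e') = Dlt (DN c' + e')" by (simp add: \<Lambda>_def LinvDX)
    have ee: "lprod (e s) (e s) = 1" for s using eN[of s] by (simp add: N1_fib_def)
    have eNs: "lprod (e s) (nT (c s)) = 0" for s using eN[of s] by (simp add: N1_fib_def)
    have eT: "lprod (e s) (dX X (c s) w) = 0" for s w
      using eN[of s] by (auto simp: N1_fib_def normal_sp_def tangent_sp_def)
    have r3: "lprod e' \<xi> = 0"
      using lprod_const_deriv[OF ee ev ev] e0 by (simp add: lprod_sym[of \<xi> e'])
    have r4: "lprod e' \<nu> + lprod \<xi> (DN c') = 0"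
      using lprod_const_deriv[OF eNs ev Nv] e0 c0 by (simp add: \<nu>_def add.commute)
    have r5: "lprod e' (DX w) + lprod \<xi> (H w c') = 0" for w
    proof -
      have "((\<lambda>s. dX X (c s) w) has_vector_derivative H w c') (at 0)"
        by (rule vd_chain[OF cv]) (simp add: c0 Hd)
      from lprod_const_deriv[OF eT[of _ w] ev this] show ?thesis
        using e0 c0 by (simp add: DX_def add.commute)
    qed
    have LL: "lprod (ltilde (nT (c s) + e s)) (ltilde (nT (c s) + e s)) = 0" for s
    proof -
      have "lprod (nT (c s) + e s) (nT (c s) + e s) = 0"
        using nTp[OF cU[of s]] ee[of s] eNs[of s]
        by (simp add: lp.add_left lp.add_right lprod_sym[of "nT (c s)" "e s"])
      then show ?thesis by (rule lprod_ltilde)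
    qed
    have "lprod (ltilde ell) (Dlt (DN c' + e')) + lprod (Dlt (DN c' + e')) (ltilde ell) = 0"
      using lprod_const_deriv[OF LL Lv Lv] c0 e0 by (simp add: ell_def \<nu>_def)
    then have "2 * (1 / fst ell) * lprod (Dlt (DN c' + e')) ell = 0"
      by (simp add: ltilde_def lp.scaleR_left lp.scaleR_right lprod_sym[of ell "Dlt (DN c' + e')"])
    then have r6: "lprod (Dlt (DN c' + e')) ell = 0" using fstell by simp
    show ?thesis
      unfolding c'_def[symmetric] e'_def[symmetric]
      using Xv Lv LGeq LamEq r3 r4 r5 r6
      by (auto simp: comp_def intro: vector_derivative_at)
  qed
  define V where "V = {x. fst x \<in> range DX \<and> lprod (snd x) \<xi> = 0 \<and>
      lprod (snd x) \<nu> + lprod \<xi> (DN (Linv (fst x))) = 0 \<and>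
      (\<forall>w. lprod (snd x) (DX w) + lprod \<xi> (H w (Linv (fst x))) = 0)}"
  have TN1V: "x \<in> V \<and> dLGt U X nT u \<xi> x = \<Lambda> x \<and> lprod (\<Lambda> x) ell = 0"
    if x: "x \<in> TN1 U X nT u \<xi>" for x
  proof -
    obtain c e where N: "N1_curve U X nT u \<xi> c e"
      and xe: "x = (vector_derivative (X \<circ> c) (at 0), vector_derivative e (at 0))"
      using x unfolding TN1_def by blast
    note C = curve[OF N]
    have xv: "x = (DX (vector_derivative c (at 0)), vector_derivative e (at 0))" using xe C by simp
    have inV: "x \<in> V" using C unfolding V_def xv by (auto simp: LinvDX)
    define P where "P d = (\<exists>c e. N1_curve U X nT u \<xi> c e \<and>
      x = (vector_derivative (X \<circ> c) (at 0), vector_derivative e (at 0)) \<and>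
      d = vector_derivative (\<lambda>s. LGt U X nT (X (c s), e s)) (at 0))" for d
    have "P (vector_derivative (\<lambda>s. LGt U X nT (X (c s), e s)) (at 0))"
      unfolding P_def using N xe by blast
    then have "P (SOME d. P d)" by (rule someI)
    then obtain c2 e2 where N2: "N1_curve U X nT u \<xi> c2 e2"
      and x2: "x = (vector_derivative (X \<circ> c2) (at 0), vector_derivative e2 (at 0))"
      and d2: "(SOME d. P d) = vector_derivative (\<lambda>s. LGt U X nT (X (c2 s), e2 s)) (at 0)"
      unfolding P_def by blast
    note C2 = curve[OF N2]
    have "dLGt U X nT u \<xi> x = (SOME d. P d)" unfolding dLGt_def P_def ..
    also have "\<dots> = \<Lambda> x" using d2 C2 x2 by simp
    finally show ?thesis using inV C xv by simp
  qed
  have linDN: "linear DN" using has_derivative_linear[OF DNd] .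
  have linH: "linear (H w)" for w using has_derivative_linear[OF Hd] .
  have V_alt: "x \<in> V \<longleftrightarrow> (\<exists>a. fst x = DX a \<and> lprod (snd x) \<xi> = 0 \<and>
      lprod (snd x) \<nu> + lprod \<xi> (DN a) = 0 \<and> (\<forall>w. lprod (snd x) (DX w) + lprod \<xi> (H w a) = 0))" for x
    unfolding V_def by (auto simp: LinvDX)
  have sV: "subspace V"
    unfolding subspace_def
  proof (intro conjI ballI allI)
    show "0 \<in> V" unfolding V_alt
      by (rule exI[of _ 0]) (simp add: linear_0[OF linDX] linear_0[OF linDN] linear_0[OF linH] lp.zero_left lp.zero_right)
  next
    fix x y assume "x \<in> V" "y \<in> V"
    then obtain a b where a: "fst x = DX a \<and> lprod (snd x) \<xi> = 0 \<and>
      lprod (snd x) \<nu> + lprod \<xi> (DN a) = 0 \<and> (\<forall>w. lprod (snd x) (DX w) + lprod \<xi> (H w a) = 0)"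
      and b: "fst y = DX b \<and> lprod (snd y) \<xi> = 0 \<and>
      lprod (snd y) \<nu> + lprod \<xi> (DN b) = 0 \<and> (\<forall>w. lprod (snd y) (DX w) + lprod \<xi> (H w b) = 0)"
      unfolding V_alt by blast
    show "x + y \<in> V" unfolding V_alt
    proof (rule exI[of _ "a + b"], intro conjI allI)
      fix w
      have "lprod (snd x) (DX w) + lprod \<xi> (H w a) = 0" "lprod (snd y) (DX w) + lprod \<xi> (H w b) = 0"
        using a b by auto
      then show "lprod (snd (x + y)) (DX w) + lprod \<xi> (H w (a + b)) = 0"
        by (simp add: lp.add_left lp.add_right linear_add[OF linH])
    qed (use a b in \<open>simp_all add: lp.add_left lp.add_right linear_add[OF linDX] linear_add[OF linDN]\<close>)
  next
    fix r and x assume "x \<in> V"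
    then obtain a where a: "fst x = DX a \<and> lprod (snd x) \<xi> = 0 \<and>
      lprod (snd x) \<nu> + lprod \<xi> (DN a) = 0 \<and> (\<forall>w. lprod (snd x) (DX w) + lprod \<xi> (H w a) = 0)"
      unfolding V_alt by blast
    show "r *\<^sub>R x \<in> V" unfolding V_alt
    proof (rule exI[of _ "r *\<^sub>R a"], intro conjI allI)
      fix w
      have "lprod (snd x) (DX w) + lprod \<xi> (H w a) = 0" using a by auto
      then have "r * (lprod (snd x) (DX w) + lprod \<xi> (H w a)) = 0" by simp
      then show "lprod (snd (r *\<^sub>R x)) (DX w) + lprod \<xi> (H w (r *\<^sub>R a)) = 0"
        by (simp add: lp.scaleR_left lp.scaleR_right linear_cmul[OF linH] algebra_simps)
    next
      have "r * (lprod (snd x) \<nu> + lprod \<xi> (DN a)) = 0" using a by simp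
      then show "lprod (snd (r *\<^sub>R x)) \<nu> + lprod \<xi> (DN (r *\<^sub>R a)) = 0"
        by (simp add: lp.scaleR_left lp.scaleR_right linear_cmul[OF linDN] algebra_simps)
    qed (use a in \<open>simp_all add: lp.scaleR_left linear_cmul[OF linDX]\<close>)
  qed
  define \<phi> where "\<phi> x = fst x + (Q (snd x) - DX (pv (Q (snd x))))" for x
  have lin\<phi>: "linear \<phi>"
    by (rule linearI) (simp_all add: \<phi>_def linear_add[OF linQ] linear_cmul[OF linQ] linear_add[OF linpv]
        linear_cmul[OF linpv] linear_add[OF linDX] linear_cmul[OF linDX] algebra_simps)
  have \<phi>W: "\<phi> ` V \<subseteq> W"
  proof
    fix z assume "z \<in> \<phi> ` V"
    then obtain x where x: "x \<in> V" "z = \<phi> x" by blast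
    then obtain a where "fst x = DX a" unfolding V_alt by blast
    then show "z \<in> W" unfolding x \<phi>_def
      by (intro subspace_add[OF sW] subspace_diff[OF sW] TW QW) (simp add: TW)
  qed
  have inj\<phi>: "inj_on \<phi> V"
    unfolding linear_inj_on_iff_eq_0[OF lin\<phi> sV]
  proof (intro ballI impI)
    fix x assume xV: "x \<in> V" and x0: "\<phi> x = 0"
    then obtain a where a: "fst x = DX a \<and> lprod (snd x) \<xi> = 0 \<and>
      lprod (snd x) \<nu> + lprod \<xi> (DN a) = 0 \<and> (\<forall>w. lprod (snd x) (DX w) + lprod \<xi> (H w a) = 0)"
      unfolding V_alt by blast
    define b where "b = snd x"
    define r where "r = Q b - DX (pv (Q b))"
    have r: "lprod r (DX w) = 0" for w unfolding r_def by (rule pv)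
    have ar: "DX a + r = 0" using x0 a by (simp add: \<phi>_def r_def b_def)
    then have "r = - DX a" by (simp add: eq_neg_iff_add_eq_0 add.commute)
    then have "lprod (DX a) (DX a) = - lprod r (DX a)" by (simp add: lp.minus_left)
    then have "lprod (DX a) (DX a) = 0" using r[of a] by simp
    then have a0: "a = 0" using posDX by force
    then have r0: "r = 0" using ar linear_0[OF linDX] by simp
    have b1: "lprod b \<xi> = 0" "lprod b \<nu> = 0" "\<And>w. lprod b (DX w) = 0"
      using a a0 by (simp_all add: b_def linear_0[OF linDN] linear_0[OF linH] lp.zero_right)
    have Qb: "Q b = b" using b1 by (simp add: Q_def)
    have "pv b = 0" by (rule pv_unique) (simp add: b1 linear_0[OF linDX])
    then have b0: "b = 0" using r0 Qb linear_0[OF linDX] by (simp add: r_def)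
    show "x = 0" using a a0 b0 linear_0[OF linDX] by (simp add: b_def prod_eq_iff)
  qed
  have dVW: "dim V \<le> dim W"
  proof -
    have "dim V = dim (\<phi> ` V)"
      using dim_image_eq[OF lin\<phi>, of V] inj\<phi> sV by (simp add: span_eq_iff[THEN iffD2])
    also have "\<dots> \<le> dim W" by (rule dim_subset[OF \<phi>W])
    finally show ?thesis .
  qed
  have imTN1: "\<iota> ` TN1 U X nT u \<xi> = W" using ident(2) TN1_id_eq by (simp add: bij_betw_def)
  have TN1_V: "TN1 U X nT u \<xi> \<subseteq> V" using TN1V by blast
  have "W \<subseteq> \<iota> ` V" using imTN1 TN1_V by blast
  then have "dim W \<le> dim (\<iota> ` V)" by (rule dim_subset)
  then have inj\<iota>: "inj_on \<iota> V" using inj_from_dim[OF ident(1) sV] dVW by simp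
  define \<iota>i where "\<iota>i = inv_into (TN1 U X nT u \<xi>) \<iota>"
  have \<iota>i: "\<iota>i z \<in> TN1 U X nT u \<xi> \<and> \<iota> (\<iota>i z) = z" if "z \<in> W" for z
    using that imTN1 unfolding \<iota>i_def by (auto intro: f_inv_into_f inv_into_into)
  define F where "F = (\<lambda>z. - Pi_tau X nT u \<xi> (dLGt U X nT u \<xi> (inv_into (TN1 U X nT u \<xi>) \<iota> z)))"
  have Fz: "F z = - Q (\<Lambda> (\<iota>i z))" if "z \<in> W" for z
    using \<iota>i[OF that] TN1V unfolding F_def \<iota>i_def[symmetric] by (simp add: Pi_eq)
  have FW: "\<forall>z\<in>W. F z \<in> W" using Fz QW subspace_neg[OF sW] by simp
  have linQL: "linear (\<lambda>x. - Q (\<Lambda> x))"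
    by (intro linear_compose_neg linear_compose[of \<Lambda> Q, unfolded comp_def] lin\<Lambda> linQ)
  define m where "m = CARD('n) - 1"
  have flin: "F (\<Sum>j<m. c j *\<^sub>R y j) = (\<Sum>j<m. c j *\<^sub>R F (y j))" if yW: "\<forall>j<m. y j \<in> W" for c y
  proof -
    define S where "S = (\<Sum>j<m. c j *\<^sub>R y j)"
    have SW: "S \<in> W" unfolding S_def using yW
      by (intro subspace_sum[OF sW] subspace_scale[OF sW]) auto
    have e1: "\<iota>i S \<in> V" using \<iota>i[OF SW] TN1_V by blast
    have yV: "\<iota>i (y j) \<in> V" if "j < m" for j
    proof -
      have "y j \<in> W" using yW that by blast
      then show ?thesis using \<iota>i[of "y j"] TN1_V by blast
    qed
    have e2: "(\<Sum>j<m. c j *\<^sub>R \<iota>i (y j)) \<in> V"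
      by (intro subspace_sum[OF sV] subspace_scale[OF sV]) (simp add: yV)
    have "\<iota> (\<Sum>j<m. c j *\<^sub>R \<iota>i (y j)) = (\<Sum>j<m. c j *\<^sub>R \<iota> (\<iota>i (y j)))"
      by (simp add: linear_sum[OF ident(1)] linear_cmul[OF ident(1)])
    also have "\<dots> = S" unfolding S_def using yW \<iota>i by (intro sum.cong) auto
    also have "\<dots> = \<iota> (\<iota>i S)" using \<iota>i[OF SW] by simp
    finally have "\<iota>i S = (\<Sum>j<m. c j *\<^sub>R \<iota>i (y j))" using inj_onD[OF inj\<iota> _ e2 e1] by simp
    then have "F S = - Q (\<Lambda> (\<Sum>j<m. c j *\<^sub>R \<iota>i (y j)))" using Fz[OF SW] by simp
    also have "\<dots> = (\<Sum>j<m. c j *\<^sub>R - Q (\<Lambda> (\<iota>i (y j))))"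
      using linear_sum[OF linQL, of "\<lambda>j. c j *\<^sub>R \<iota>i (y j)" "{..<m}"]
      by (simp add: linear_cmul[OF linQL])
    also have "\<dots> = (\<Sum>j<m. c j *\<^sub>R F (y j))" using yW Fz by (intro sum.cong) auto
    finally show ?thesis unfolding S_def .
  qed
  define w where "w i = \<iota> (t i)" for i
  have wW: "\<forall>i<m. w i \<in> W" using tang imTN1 unfolding w_def m_def by blast
  have main: "vol_elem m lprod (\<lambda>i. F (w i)) = \<bar>sub_det W F\<bar> * vol_elem m lprod w"
    by (rule subdet_vol[OF bb_lprod sW dimW[folded m_def] FW flin wW])
  have injT: "inj_on \<iota> (TN1 U X nT u \<xi>)" using ident(2) by (simp add: bij_betw_def)
  have Fw: "F (w i) = - Q (dLGt U X nT u \<xi> (t i))" if "i < m" for i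
  proof -
    have ti: "t i \<in> TN1 U X nT u \<xi>" using tang that by (simp add: m_def)
    have "\<iota>i (w i) = t i" unfolding \<iota>i_def w_def by (rule inv_into_f_f[OF injT ti])
    then show ?thesis using Fz[of "w i"] wW that TN1V[OF ti] by simp
  qed
  have lhs: "vol_elem m lprod (\<lambda>i. dLGt U X nT u \<xi> (t i)) = vol_elem m lprod (\<lambda>i. F (w i))"
    unfolding vol_elem_def
  proof (rule arg_cong[where f=sqrt], rule ndet_cong)
    fix i l assume il: "i < m" "l < m"
    have o: "lprod (dLGt U X nT u \<xi> (t i)) ell = 0" "lprod (dLGt U X nT u \<xi> (t l)) ell = 0"
      using TN1V tang il by (auto simp: m_def)
    show "lprod (dLGt U X nT u \<xi> (t i)) (dLGt U X nT u \<xi> (t l)) = lprod (F (w i)) (F (w l))"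
      using Fw[OF il(1)] Fw[OF il(2)] Qpres[OF o] by (simp add: lp.minus_left lp.minus_right)
  qed
  have rhs: "vol_elem m (\<lambda>a b. lprod (\<iota> a) (\<iota> b)) t = vol_elem m lprod w"
    by (simp add: vol_elem_def w_def)
  show ?thesis
    unfolding TN1_id_eq F_def[symmetric] m_def[symmetric] lhs rhs main ..
qed
end
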